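(* Let $\tau\in\mathcal{H}$ with $\Im(\tau)\ge\sqrt3/4$, let $z\in\mathbb{C}$ with $0\le\Im(z)\le\Im(\tau)/4$, and let $\lambda,\mu\in\mathbb{C}\setminus\{0\}$. Then $F^\infty$ is defined at the given point and $$F^{\infty}\left(\lambda\theta_{00}^2(z,\tau),\ \lambda\theta_{01}^2(z,\tau),\ \mu\theta_{00}^2(0,\tau),\ \mu\theta_{01}^2(0,\tau)\right)=(\lambda,\mu).$$ In particular $$F^{\infty}\left(1,\frac{\theta_{01}^2(z,\tau)}{\theta_{00}^2(z,\tau)},1,\frac{\theta_{01}^2(0,\tau)}{\theta_{00}^2(0,\tau)}\right)=\left(\frac{1}{\theta_{00}^2(z,\tau)},\frac{1}{\theta_{00}^2(0,\tau)}\right).$$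
   Context: For $z\in\mathbb{C}$ and $\tau$ in the upper half-plane $\mathcal{H}=\{\tau\in\mathbb{C}:\Im\tau>0\}$, $\theta(z,\tau)=\sum_{n\in\mathbb{Z}}\exp(\pi i\tau n^2+2\pi i n z)$; $\theta_{00}(z,\tau)=\theta(z,\tau)$, $\theta_{01}(z,\tau)=\theta(z+\tfrac12,\tau)$. Optimal F sequence: given $(x_0,y_0,z_0,t_0)\in\mathbb{C}^4$, define recursively $$(x_{n+1},y_{n+1},z_{n+1},t_{n+1})=\Big(\tfrac{\sqrt{x_n}\sqrt{z_n}+\sqrt{y_n}\sqrt{t_n}}{2},\ \tfrac{\sqrt{x_n}\sqrt{t_n}+\sqrt{y_n}\sqrt{z_n}}{2},\ \tfrac{z_n+t_n}{2},\ \sqrt{z_n}\sqrt{t_n}\Big),$$ with square roots chosen "good": $\Re\sqrt{x_n}\ge0$, $\Re\sqrt{z_n}\ge0$; either $|\sqrt{x_n}-\sqrt{y_n}|<|\sqrt{x_n}+\sqrt{y_n}|$ or equality and $\Im(\sqrt{y_n}/\sqrt{x_n})>0$; either $|\sqrt{z_n}-\sqrt{t_n}|<|\sqrt{z_n}+\sqrt{t_n}|$ or equality and $\Im(\sqrt{t_n}/\sqrt{z_n})>0$. When $z_\infty=\lim_n z_n$ exists and is nonzero and $\lim_n(x_n/z_\infty)^{2^n}$ exists, set $F^\infty(x_0,y_0,z_0,t_0)=\big(z_\infty\lim_n(x_n/z_\infty)^{2^n},\ z_\infty\big)$. *)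

theory Defs
  imports "HOL-Analysis.Analysis"
begin

definition jtheta :: "complex \<Rightarrow> complex \<Rightarrow> complex" where
  "jtheta z \<tau> = infsum (\<lambda>n::int. exp (pi * \<i> * \<tau> * (of_int n)^2 + 2 * pi * \<i> * of_int n * z)) UNIV"

definition theta00 :: "complex \<Rightarrow> complex \<Rightarrow> complex" where
  "theta00 z \<tau> = jtheta z \<tau>"

definition theta01 :: "complex \<Rightarrow> complex \<Rightarrow> complex" where
  "theta01 z \<tau> = jtheta (z + 1/2) \<tau>"

definition good_roots :: "complex \<Rightarrow> complex \<Rightarrow> complex \<Rightarrow> complex \<Rightarrow> bool" where
  "good_roots X Y a b \<longleftrightarrow> a^2 = X \<and> b^2 = Y \<and> Re a \<ge> 0 \<and>
     (cmod (a - b) < cmod (a + b) \<or> (cmod (a - b) = cmod (a + b) \<and> Im (b / a) > 0))"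

definition optimal_F_seq ::
  "complex \<Rightarrow> complex \<Rightarrow> complex \<Rightarrow> complex \<Rightarrow>
   (nat \<Rightarrow> complex) \<Rightarrow> (nat \<Rightarrow> complex) \<Rightarrow> (nat \<Rightarrow> complex) \<Rightarrow> (nat \<Rightarrow> complex) \<Rightarrow> bool" where
  "optimal_F_seq x0 y0 z0 t0 x y z t \<longleftrightarrow>
     x 0 = x0 \<and> y 0 = y0 \<and> z 0 = z0 \<and> t 0 = t0 \<and>
     (\<forall>n. \<exists>a b c d. good_roots (x n) (y n) a b \<and> good_roots (z n) (t n) c d \<and>
        x (Suc n) = (a * c + b * d) / 2 \<and>
        y (Suc n) = (a * d + b * c) / 2 \<and>
        z (Suc n) = (z n + t n) / 2 \<and>
        t (Suc n) = c * d)"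

definition F_inf_eq ::
  "complex \<Rightarrow> complex \<Rightarrow> complex \<Rightarrow> complex \<Rightarrow> complex \<times> complex \<Rightarrow> bool" where
  "F_inf_eq x0 y0 z0 t0 v \<longleftrightarrow>
     (\<exists>x y z t. optimal_F_seq x0 y0 z0 t0 x y z t) \<and>
     (\<forall>x y z t. optimal_F_seq x0 y0 z0 t0 x y z t \<longrightarrow>
        (\<exists>zinf L. z \<longlonglongrightarrow> zinf \<and> zinf \<noteq> 0 \<and>
           (\<lambda>n. (x n / zinf) ^ (2 ^ n)) \<longlonglongrightarrow> L \<and> v = (zinf * L, zinf)))"

end

theory Submission
  imports Defs
begin



definition tt :: "complex \<Rightarrow> complex \<Rightarrow> int \<Rightarrow> complex" where
  "tt z \<tau> n = exp (pi * \<i> * \<tau> * (of_int n)^2 + 2 * pi * \<i> * of_int n * z)"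

lemma jtheta_tt: "jtheta z \<tau> = infsum (tt z \<tau>) UNIV"
  unfolding jtheta_def tt_def by simp

lemma norm_tt: "norm (tt z \<tau> n) = exp (- pi * Im \<tau> * (of_int n)^2 - 2 * pi * of_int n * Im z)"
  unfolding tt_def norm_exp_eq_Re by (simp add: power2_eq_square)

definition gg :: "real \<Rightarrow> int \<Rightarrow> real" where
  "gg u n = (if n > 0 then u^2 * (u^4)^(nat (n-1)) else u * (u^5)^(nat (-n-1)))"

lemma tt_bound:
  assumes "Im \<tau> > 0" "0 \<le> Im z" "Im z \<le> Im \<tau> / 4" "n \<noteq> 0"
  shows "norm (tt z \<tau> n) \<le> gg (exp (- pi * Im \<tau> / 2)) n"
proof (cases "n > 0")
  case True
  define k where "k = nat (n - 1)"
  have n: "n = int k + 1" using True k_def by simp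
  have "gg (exp (- pi * Im \<tau> / 2)) n = exp (of_nat (2 + 4*k) * (- pi * Im \<tau> / 2))"
    unfolding gg_def using True k_def
    by (simp add: exp_of_nat_mult[symmetric] power_add power_mult[symmetric] exp_add[symmetric] algebra_simps)
  also have "\<dots> \<ge> exp (- pi * Im \<tau> * (of_int n)^2 - 2 * pi * of_int n * Im z)"
  proof (subst exp_le_cancel_iff)
    have a: "pi * Im \<tau> * (real k)^2 \<ge> 0" using assms by simp
    have b: "2 * pi * (real k + 1) * Im z \<ge> 0" using assms by simp
    show "- pi * Im \<tau> * (of_int n)\<^sup>2 - 2 * pi * of_int n * Im z \<le> of_nat (2 + 4 * k) * (- pi * Im \<tau> / 2)"
      using a b unfolding n by (simp add: power2_eq_square algebra_simps)
  qed
  finally show ?thesis by (simp add: norm_tt)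
next
  case False
  define k where "k = nat (- n - 1)"
  have n: "n = - int k - 1" using False assms(4) k_def by simp
  have "gg (exp (- pi * Im \<tau> / 2)) n = exp (of_nat (1 + 5*k) * (- pi * Im \<tau> / 2))"
    unfolding gg_def using False k_def
    by (simp add: exp_of_nat_mult[symmetric] power_add power_mult[symmetric] exp_add[symmetric] algebra_simps)
  also have "\<dots> \<ge> exp (- pi * Im \<tau> * (of_int n)^2 - 2 * pi * of_int n * Im z)"
  proof (subst exp_le_cancel_iff)
    have kk: "(real k)^2 \<ge> real k" by (cases k) (auto simp: power2_eq_square)
    have a: "pi * Im \<tau> * real k \<le> pi * Im \<tau> * (real k)^2"
      using assms kk by (intro mult_left_mono) auto
    have b: "2 * pi * (real k + 1) * Im z \<le> 2 * pi * (real k + 1) * (Im \<tau> / 4)"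
      using assms by (intro mult_left_mono) auto
    have e1: "- pi * Im \<tau> * (of_int n)^2 - 2 * pi * of_int n * Im z = - (pi*Im \<tau>*(real k)^2) - 2*(pi*Im \<tau>*real k) - pi*Im \<tau> + 2*pi*(real k+1)*Im z"
      unfolding n by (simp add: power2_eq_square algebra_simps)
    have e2: "of_nat (1+5*k) * (-pi*Im \<tau>/2) = - (pi*Im \<tau>)/2 - 5*(pi*Im \<tau>*real k)/2" by (simp add: algebra_simps)
    have e3: "2 * pi * (real k + 1) * (Im \<tau> / 4) = (pi*Im \<tau>*real k)/2 + (pi*Im \<tau>)/2" by (simp add: algebra_simps)
    show "- pi * Im \<tau> * (of_int n)\<^sup>2 - 2 * pi * of_int n * Im z \<le> of_nat (1 + 5 * k) * (- pi * Im \<tau> / 2)"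
      unfolding e1 e2 using a b e3 by linarith
  qed
  finally show ?thesis by (simp add: norm_tt)
qed


lemma geo_has_sum:
  fixes c x :: real
  assumes "0 \<le> c" "0 \<le> x" "x < 1"
  shows "((\<lambda>k::nat. c * x^k) has_sum (c / (1 - x))) UNIV"
proof -
  have "(\<lambda>k. c * x^k) sums (c * (1 / (1 - x)))"
    using assms by (intro sums_mult geometric_sums) auto
  then show ?thesis
    using assms by (intro sums_nonneg_imp_has_sum) auto
qed

lemma gg_has_sum:
  assumes "0 \<le> u" "u < 1"
  shows "(gg u has_sum (u^2 / (1 - u^4) + u / (1 - u^5))) (- {0})"
proof -
  have u4: "u^4 < 1" and u5: "u^5 < 1" using assms by (auto simp: power_less_one_iff)
  have p: "(gg u has_sum (u^2 / (1 - u^4))) {n. n > 0}"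
  proof -
    have "((\<lambda>k::nat. u^2 * (u^4)^k) has_sum (u^2 / (1 - u^4))) UNIV"
      using assms u4 by (intro geo_has_sum) auto
    moreover have "((\<lambda>k::nat. u^2 * (u^4)^k) has_sum (u^2 / (1 - u^4))) UNIV
       = (gg u has_sum (u^2 / (1 - u^4))) {n. n > 0}"
      by (rule has_sum_reindex_bij_witness[where j = "\<lambda>k. int k + 1" and i = "\<lambda>n. nat (n - 1)"])
         (auto simp: gg_def)
    ultimately show ?thesis by simp
  qed
  have m: "(gg u has_sum (u / (1 - u^5))) {n. n < 0}"
  proof -
    have "((\<lambda>k::nat. u * (u^5)^k) has_sum (u / (1 - u^5))) UNIV"
      using assms u5 by (intro geo_has_sum) auto
    moreover have "((\<lambda>k::nat. u * (u^5)^k) has_sum (u / (1 - u^5))) UNIV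
       = (gg u has_sum (u / (1 - u^5))) {n. n < 0}"
      by (rule has_sum_reindex_bij_witness[where j = "\<lambda>k. - int k - 1" and i = "\<lambda>n. nat (- n - 1)"])
         (auto simp: gg_def)
    ultimately show ?thesis by simp
  qed
  have "(gg u has_sum (u^2 / (1 - u^4) + u / (1 - u^5))) ({n. n > 0} \<union> {n. n < 0})"
    by (rule has_sum_Un_disjoint[OF p m]) auto
  moreover have "{n::int. n > 0} \<union> {n. n < 0} = - {0}" by auto
  ultimately show ?thesis by simp
qed

lemma gg_nonneg: "0 \<le> u \<Longrightarrow> 0 \<le> gg u n"
  by (simp add: gg_def)


lemma tt_summ:
  assumes "Im \<tau> > 0" "0 \<le> Im z" "Im z \<le> Im \<tau> / 4"
  defines "u \<equiv> exp (- pi * Im \<tau> / 2)"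
  shows "(\<lambda>n. norm (tt z \<tau> n)) summable_on (- {0})"
    and "infsum (\<lambda>n. norm (tt z \<tau> n)) (- {0}) \<le> u^2 / (1 - u^4) + u / (1 - u^5)"
    and "tt z \<tau> summable_on UNIV"
proof -
  have u0: "0 \<le> u" and u1: "u < 1" using assms(1) by (auto simp: u_def)
  have hs: "(gg u has_sum (u^2 / (1 - u^4) + u / (1 - u^5))) (- {0})"
    using gg_has_sum[OF u0 u1] .
  have le: "norm (tt z \<tau> n) \<le> gg u n" if "n \<in> - {0}" for n
    using tt_bound[OF assms(1-3)] that by (auto simp: u_def)
  show s: "(\<lambda>n. norm (tt z \<tau> n)) summable_on (- {0})"
    by (rule summable_on_comparison_test[OF has_sum_imp_summable[OF hs]]) (use le in auto)
  have "infsum (\<lambda>n. norm (tt z \<tau> n)) (- {0}) \<le> infsum (gg u) (- {0})"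
    by (rule infsum_mono[OF s has_sum_imp_summable[OF hs]]) (use le in auto)
  also have "\<dots> = u^2 / (1 - u^4) + u / (1 - u^5)" using hs by (simp add: has_sum_iff)
  finally show "infsum (\<lambda>n. norm (tt z \<tau> n)) (- {0}) \<le> u^2 / (1 - u^4) + u / (1 - u^5)" .
  have "tt z \<tau> summable_on (- {0})"
    by (rule abs_summable_summable) (use s in simp)
  then have "tt z \<tau> summable_on insert 0 (- {0})"
    by (simp add: summable_on_insert_iff)
  moreover have "insert 0 (- {0}) = (UNIV :: int set)" by auto
  ultimately show "tt z \<tau> summable_on UNIV" by simp
qed

lemma u_bound:
  assumes "Im \<tau> \<ge> sqrt 3 / 4"
  shows "exp (- pi * Im \<tau> / 2) \<le> 0.56"
proof -
  have s3: "1.73 \<le> sqrt 3" by (rule real_le_rsqrt) (simp add: power2_eq_square)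
  have p3: "3 \<le> pi" using pi_gt3 by simp
  have x: "0.64 \<le> pi * sqrt 3 / 8"
  proof -
    have "3 * 1.73 \<le> pi * sqrt 3" using s3 p3 by (intro mult_mono) auto
    then show ?thesis by simp
  qed
  have "(1 + 0.64/3)^3 \<le> (1 + (pi * sqrt 3 / 8)/3)^3"
    using x by (intro power_mono) auto
  also have "\<dots> \<le> exp ((pi * sqrt 3 / 8)/3)^3"
    by (intro power_mono exp_ge_add_one_self) (use x in auto)
  also have "\<dots> = exp (pi * sqrt 3 / 8)"
    by (simp add: exp_of_nat_mult[symmetric])
  finally have e: "1 / 0.56 \<le> exp (pi * sqrt 3 / 8)" by (simp add: power_divide)
  have "exp (- pi * Im \<tau> / 2) \<le> exp (- (pi * sqrt 3 / 8))"
    using assms by (simp add: mult_left_mono)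
  also have "\<dots> = 1 / exp (pi * sqrt 3 / 8)" by (simp add: exp_minus field_simps)
  also have "\<dots> \<le> 0.56" using e by (simp add: divide_le_eq)
  finally show ?thesis .
qed

lemma bnd_num:
  fixes u :: real
  assumes "0 \<le> u" "u \<le> 0.56"
  shows "u^2 / (1 - u^4) + u / (1 - u^5) < 1" and "u^2 / (1 - u^4) + u / (1 - u^5) \<le> 2 * u"
proof -
  have a4: "u^4 \<le> 0.56^4" using assms by (intro power_mono) auto
  have a5: "u^5 \<le> 0.56^5" using assms by (intro power_mono) auto
  have b4: "0.9 \<le> 1 - u^4" using a4 by (simp add: power_divide)
  have b5: "0.94 \<le> 1 - u^5" using a5 by (simp add: power_divide)
  have c1: "u^2 / (1 - u^4) \<le> u^2 / 0.9"
    using b4 by (intro divide_left_mono) auto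
  have c2: "u / (1 - u^5) \<le> u / 0.94"
    using b5 assms by (intro divide_left_mono) auto
  have u2: "u^2 \<le> 0.56 * u" using mult_right_mono[OF assms(2) assms(1)] by (simp add: power2_eq_square)
  show "u^2 / (1 - u^4) + u / (1 - u^5) < 1" using c1 c2 u2 assms by simp
  show "u^2 / (1 - u^4) + u / (1 - u^5) \<le> 2 * u" using c1 c2 u2 assms by simp
qed


lemma exp_pi_int: "exp (pi * \<i> * of_int n) = (if even n then 1 else -1)"
proof (cases "even n")
  case True
  then obtain k where n: "n = 2 * k" by (auto elim: evenE)
  have "pi * \<i> * of_int n = \<i> * (of_int k * (of_real pi * 2))" by (simp add: n algebra_simps)
  then have "exp (pi * \<i> * of_int n) = exp (\<i> * (of_int k * (of_real pi * 2)))" by (rule arg_cong)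
  also have "\<dots> = 1" by (rule exp_2pi_1_int)
  finally show ?thesis using True by simp
next
  case False
  then obtain k where n: "n = 2 * k + 1" by (auto elim: oddE)
  have "pi * \<i> * of_int n = \<i> * (of_int k * (of_real pi * 2)) + pi * \<i>" by (simp add: n algebra_simps)
  then have "exp (pi * \<i> * of_int n) = exp (\<i> * (of_int k * (of_real pi * 2)) + pi * \<i>)" by (rule arg_cong)
  also have "\<dots> = -1" by (simp only: exp_add exp_2pi_1_int) simp
  finally show ?thesis using False by simp
qed

lemma tt_shift: "tt (z + 1/2) \<tau> n = (if even n then 1 else -1) * tt z \<tau> n"
proof -
  have "tt (z + 1/2) \<tau> n = tt z \<tau> n * exp (pi * \<i> * of_int n)"
    unfolding tt_def exp_add[symmetric] by (simp add: algebra_simps)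
  then show ?thesis by (simp add: exp_pi_int)
qed

lemma tt_shift1: "tt (z + 1) \<tau> n = tt z \<tau> n"
proof -
  have "tt (z + 1) \<tau> n = tt z \<tau> n * exp (\<i> * (of_int n * (of_real pi * 2)))"
    unfolding tt_def exp_add[symmetric] by (simp add: algebra_simps)
  then show ?thesis by simp
qed

lemma jtheta_shift1: "jtheta (z + 1) \<tau> = jtheta z \<tau>"
  unfolding jtheta_tt tt_shift1 ..

lemma tt_zero [simp]: "tt z \<tau> 0 = 1"
  by (simp add: tt_def)

lemma infsum_split0:
  fixes f :: "int \<Rightarrow> complex"
  assumes "f summable_on (- {0})"
  shows "infsum f UNIV = f 0 + infsum f (- {0})"
proof -
  have "infsum f (insert 0 (- {0})) = f 0 + infsum f (- {0})"
    by (rule infsum_insert[OF assms]) simp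
  moreover have "insert 0 (- {0}) = (UNIV :: int set)" by auto
  ultimately show ?thesis by simp
qed

lemma theta_est:
  assumes "Im \<tau> \<ge> sqrt 3 / 4" "0 \<le> Im z" "Im z \<le> Im \<tau> / 4"
  shows "norm (jtheta z \<tau> - jtheta (z + 1/2) \<tau>) < norm (jtheta z \<tau> + jtheta (z + 1/2) \<tau>)"
    and "norm (jtheta z \<tau> - 1) \<le> 2 * exp (- pi * Im \<tau> / 2)"
proof -
  have t0: "Im \<tau> > 0" proof -
    have "0 < sqrt (3::real)" by simp
    then show ?thesis using assms(1) by linarith
  qed
  define u where "u = exp (- pi * Im \<tau> / 2)"
  define T where "T = tt z \<tau>"
  define S where "S = infsum (\<lambda>n. norm (T n)) (- {0})"
  have u0: "0 \<le> u" unfolding u_def by simp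
  have uu: "u \<le> 0.56" unfolding u_def by (rule u_bound[OF assms(1)])
  have Ssum: "(\<lambda>n. norm (T n)) summable_on (- {0})"
    unfolding T_def by (rule tt_summ(1)[OF t0 assms(2,3)])
  have "S \<le> u^2 / (1 - u^4) + u / (1 - u^5)"
    unfolding S_def T_def u_def by (rule tt_summ(2)[OF t0 assms(2,3)])
  with bnd_num[OF u0 uu] have S1: "S < 1" and S2: "S \<le> 2 * u" by auto
  define e :: "int \<Rightarrow> complex" where "e n = (if even n then 1 else -1)" for n
  have ne: "norm (e n) = 1" for n by (simp add: e_def)
  have Tsum: "T summable_on (- {0})"
    by (rule abs_summable_summable) (use Ssum in simp)
  have eTsum: "(\<lambda>n. e n * T n) summable_on (- {0})"
    by (rule abs_summable_summable) (use Ssum in \<open>simp add: norm_mult ne\<close>)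
  have th1: "jtheta z \<tau> = 1 + infsum T (- {0})"
    unfolding jtheta_tt T_def[symmetric] infsum_split0[OF Tsum] by (simp add: T_def)
  have th2: "jtheta (z + 1/2) \<tau> = 1 + infsum (\<lambda>n. e n * T n) (- {0})"
  proof -
    have "jtheta (z + 1/2) \<tau> = infsum (\<lambda>n. e n * T n) UNIV"
    proof -
      have "tt (z + 1/2) \<tau> = (\<lambda>n. e n * T n)" by (rule ext) (simp only: tt_shift e_def T_def)
      then show ?thesis unfolding jtheta_tt by simp
    qed
    also have "\<dots> = 1 + infsum (\<lambda>n. e n * T n) (- {0})"
      by (subst infsum_split0[OF eTsum]) (simp add: e_def T_def)
    finally show ?thesis .
  qed
  define P where "P = infsum (\<lambda>n. (1 + e n) * T n) (- {0})"
  define D where "D = infsum (\<lambda>n. (1 - e n) * T n) (- {0})"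
  have sumP: "jtheta z \<tau> + jtheta (z + 1/2) \<tau> = 2 + P"
  proof -
    have "P = infsum T (- {0}) + infsum (\<lambda>n. e n * T n) (- {0})"
      unfolding P_def infsum_add[OF Tsum eTsum, symmetric] by (simp add: algebra_simps)
    then show ?thesis unfolding th1 th2 by simp
  qed
  have difD: "jtheta z \<tau> - jtheta (z + 1/2) \<tau> = D"
  proof -
    have "D = infsum T (- {0}) - infsum (\<lambda>n. e n * T n) (- {0})"
    proof -
      have m: "(\<lambda>n. - (e n * T n)) summable_on (- {0})" using eTsum by (simp add: summable_on_uminus)
      show ?thesis
        unfolding D_def diff_conv_add_uminus infsum_uminus[symmetric] infsum_add[OF Tsum m, symmetric]
        by (simp add: algebra_simps)
    qed
    then show ?thesis unfolding th1 th2 by simp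
  qed
  define ev :: "int \<Rightarrow> real" where "ev n = (if even n then 1 else 0)" for n
  have Xe_s: "(\<lambda>n. 2 * ev n * norm (T n)) summable_on (- {0})"
    by (rule summable_on_comparison_test[where f = "\<lambda>n. 2 * norm (T n)"])
       (use Ssum in \<open>auto simp: ev_def summable_on_cmult_right\<close>)
  have Xo_s: "(\<lambda>n. 2 * (1 - ev n) * norm (T n)) summable_on (- {0})"
    by (rule summable_on_comparison_test[where f = "\<lambda>n. 2 * norm (T n)"])
       (use Ssum in \<open>auto simp: ev_def summable_on_cmult_right\<close>)
  define Xe where "Xe = infsum (\<lambda>n. 2 * ev n * norm (T n)) (- {0})"
  define Xo where "Xo = infsum (\<lambda>n. 2 * (1 - ev n) * norm (T n)) (- {0})"
  have XS: "Xe + Xo = 2 * S"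
    unfolding Xe_def Xo_def S_def infsum_add[OF Xe_s Xo_s, symmetric] infsum_cmult_right'[symmetric]
    by (simp add: algebra_simps)
  have Psum: "(\<lambda>n. (1 + e n) * T n) summable_on (- {0})"
    using summable_on_add[OF Tsum eTsum] by (simp add: algebra_simps)
  have Dsum: "(\<lambda>n. (1 - e n) * T n) summable_on (- {0})"
  proof -
    have m: "(\<lambda>n. - (e n * T n)) summable_on (- {0})" using eTsum by (simp add: summable_on_uminus)
    show ?thesis using summable_on_add[OF Tsum m] by (simp add: algebra_simps)
  qed
  have nP: "norm P \<le> Xe"
    unfolding P_def Xe_def
    by (rule norm_infsum_le[OF has_sum_infsum[OF Psum] has_sum_infsum[OF Xe_s]])
       (auto simp: e_def ev_def norm_mult)
  have nD: "norm D \<le> Xo"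
    unfolding D_def Xo_def
    by (rule norm_infsum_le[OF has_sum_infsum[OF Dsum] has_sum_infsum[OF Xo_s]])
       (auto simp: e_def ev_def norm_mult)
  have "norm (2 + P) \<ge> 2 - norm P"
    using norm_triangle_ineq2[of 2 "- P"] by simp
  then show "norm (jtheta z \<tau> - jtheta (z + 1/2) \<tau>) < norm (jtheta z \<tau> + jtheta (z + 1/2) \<tau>)"
    unfolding sumP difD using nP nD XS S1 by linarith
  have "norm (jtheta z \<tau> - 1) = norm (infsum T (- {0}))" by (simp add: th1)
  also have "\<dots> \<le> S"
    unfolding S_def by (rule norm_infsum_le[OF has_sum_infsum[OF Tsum] has_sum_infsum[OF Ssum]]) auto
  finally show "norm (jtheta z \<tau> - 1) \<le> 2 * exp (- pi * Im \<tau> / 2)" using S2 by (simp add: u_def)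
qed




lemma prod_infsum:
  fixes f g :: "int \<Rightarrow> complex"
  assumes "f summable_on UNIV" "g summable_on UNIV"
  shows "(\<lambda>(x,y). f x * g y) summable_on UNIV"
    and "infsum f UNIV * infsum g UNIV = infsum (\<lambda>(x,y). f x * g y) UNIV"
proof -
  have a1: "Infinite_Set_Sum.abs_summable_on f UNIV"
    using assms(1) by (simp add: summable_on_iff_abs_summable_on_complex abs_summable_equivalent)
  have a2: "Infinite_Set_Sum.abs_summable_on g UNIV"
    using assms(2) by (simp add: summable_on_iff_abs_summable_on_complex abs_summable_equivalent)
  have p: "Infinite_Set_Sum.abs_summable_on (\<lambda>(x,y). f x * g y) (UNIV \<times> UNIV)"
    by (rule abs_summable_on_product[OF _ _ a1 a2]) auto
  then have p': "Infinite_Set_Sum.abs_summable_on (\<lambda>(x,y). f x * g y) UNIV" by simp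
  show "(\<lambda>(x,y). f x * g y) summable_on UNIV"
    using p' by (simp add: summable_on_iff_abs_summable_on_complex abs_summable_equivalent)
  have "infsetsum (\<lambda>(x,y). f x * g y) (UNIV \<times> UNIV) = infsetsum f UNIV * infsetsum g UNIV"
    by (rule infsetsum_product[OF _ _ a1 a2]) auto
  then show "infsum f UNIV * infsum g UNIV = infsum (\<lambda>(x,y). f x * g y) UNIV"
    using infsetsum_infsum[OF a1] infsetsum_infsum[OF a2] infsetsum_infsum[OF p'] by simp
qed


lemma tt_dup: "tt (z + w) (2 * \<tau>) j * tt (z - w) (2 * \<tau>) k = tt z \<tau> (j + k) * tt w \<tau> (j - k)"
  unfolding tt_def exp_add[symmetric] by (rule arg_cong[where f = exp]) (simp add: power2_eq_square algebra_simps)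

lemma tt_region:
  assumes "Im \<tau> > 0" "0 \<le> Im z" "Im z \<le> Im \<tau> / 4"
  shows "Im (2 * \<tau>) > 0" "Im (2 * \<tau>) / 4 \<ge> Im z"
  using assms by auto

lemma dup:
  assumes "Im \<tau> > 0" "0 \<le> Im z" "Im z \<le> Im \<tau> / 4" "Im w = 0"
  shows "jtheta z \<tau> * jtheta w \<tau> + jtheta (z + 1/2) \<tau> * jtheta (w + 1/2) \<tau>
         = 2 * (jtheta (z + w) (2 * \<tau>) * jtheta (z - w) (2 * \<tau>))"
proof -
  define E where "E = {p :: int \<times> int. even (fst p + snd p)}"
  have s1: "tt z \<tau> summable_on UNIV" by (rule tt_summ(3)) (use assms in auto)
  have s2: "tt w \<tau> summable_on UNIV" by (rule tt_summ(3)) (use assms in auto)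
  have s3: "tt (z + 1/2) \<tau> summable_on UNIV" by (rule tt_summ(3)) (use assms in auto)
  have s4: "tt (w + 1/2) \<tau> summable_on UNIV" by (rule tt_summ(3)) (use assms in auto)
  have s5: "tt (z + w) (2 * \<tau>) summable_on UNIV" by (rule tt_summ(3)) (use assms in auto)
  have s6: "tt (z - w) (2 * \<tau>) summable_on UNIV" by (rule tt_summ(3)) (use assms in auto)
  have L: "jtheta z \<tau> * jtheta w \<tau> + jtheta (z + 1/2) \<tau> * jtheta (w + 1/2) \<tau>
      = infsum (\<lambda>(m,n). tt z \<tau> m * tt w \<tau> n + tt (z + 1/2) \<tau> m * tt (w + 1/2) \<tau> n) UNIV"
    unfolding jtheta_tt prod_infsum(2)[OF s1 s2] prod_infsum(2)[OF s3 s4]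
    using infsum_add[OF prod_infsum(1)[OF s1 s2] prod_infsum(1)[OF s3 s4]]
    by (simp add: case_prod_unfold)
  also have "\<dots> = infsum (\<lambda>(m,n). 2 * (tt z \<tau> m * tt w \<tau> n)) E"
    by (rule infsum_cong_neutral) (auto simp: E_def tt_shift)
  also have "\<dots> = 2 * infsum (\<lambda>(m,n). tt z \<tau> m * tt w \<tau> n) E"
    by (subst infsum_cmult_right'[symmetric]) (simp add: case_prod_unfold)
  also have "infsum (\<lambda>(m,n). tt z \<tau> m * tt w \<tau> n) E
     = infsum (\<lambda>(j,k). tt (z + w) (2 * \<tau>) j * tt (z - w) (2 * \<tau>) k) UNIV"
    apply (rule infsum_reindex_bij_witness[where i = "\<lambda>(m,n). ((m+n) div 2, (m-n) div 2)"
        and j = "\<lambda>(j,k). (j+k, j-k)", symmetric])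
    apply (auto simp: E_def tt_dup)
    apply presburger
    done
  also have "\<dots> = jtheta (z + w) (2 * \<tau>) * jtheta (z - w) (2 * \<tau>)"
    unfolding jtheta_tt prod_infsum(2)[OF s5 s6] ..
  finally show ?thesis .
qed




lemma good_unique:
  fixes l P Q a b :: complex
  assumes g: "good_roots (l * P^2) (l * Q^2) a b" and pq: "norm (P - Q) < norm (P + Q)" and l: "l \<noteq> 0"
  shows "\<exists>s. s^2 = l \<and> a = s * P \<and> b = s * Q"
proof -
  define s0 where "s0 = csqrt l"
  have s0: "s0^2 = l" by (simp add: s0_def)
  have s0n: "s0 \<noteq> 0" using l s0 by auto
  have "a^2 = (s0 * P)^2" using g s0 by (simp add: good_roots_def power_mult_distrib)
  then have ha: "a = s0 * P \<or> a = - (s0 * P)" by (simp add: power2_eq_iff)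
  have "b^2 = (s0 * Q)^2" using g s0 by (simp add: good_roots_def power_mult_distrib)
  then have hb: "b = s0 * Q \<or> b = - (s0 * Q)" by (simp add: power2_eq_iff)
  have gl: "cmod (a - b) \<le> cmod (a + b)" using g unfolding good_roots_def by auto
  have no1: "\<not> (a = s0 * P \<and> b = - (s0 * Q))"
  proof
    assume h: "a = s0 * P \<and> b = - (s0 * Q)"
    then have "a - b = s0 * (P + Q)" "a + b = s0 * (P - Q)" by (simp_all add: algebra_simps)
    then have "cmod (a - b) = cmod s0 * cmod (P + Q)" "cmod (a + b) = cmod s0 * cmod (P - Q)"
      by (simp_all add: norm_mult)
    with gl pq s0n show False by (simp add: mult_le_cancel_left_pos)
  qed
  have no2: "\<not> (a = - (s0 * P) \<and> b = s0 * Q)"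
  proof
    assume h: "a = - (s0 * P) \<and> b = s0 * Q"
    then have "a - b = - (s0 * (P + Q))" "a + b = - (s0 * (P - Q))" by (simp_all add: algebra_simps)
    then have "cmod (a - b) = cmod s0 * cmod (P + Q)" "cmod (a + b) = cmod s0 * cmod (P - Q)"
      by (simp_all only: norm_minus_cancel norm_mult)
    with gl pq s0n show False by (simp add: mult_le_cancel_left_pos)
  qed
  show ?thesis
  proof (cases "a = s0 * P")
    case True
    with hb no1 have "b = s0 * Q" by auto
    with True s0 show ?thesis by blast
  next
    case False
    with ha have "a = - s0 * P" by auto
    moreover with hb no2 have "b = - s0 * Q" by auto
    ultimately show ?thesis using s0 by (intro exI[of _ "- s0"]) auto
  qed
qed

definition pick :: "complex \<Rightarrow> complex \<Rightarrow> complex" where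
  "pick l P = (if 0 \<le> Re (csqrt l * P) then csqrt l else - csqrt l)"

lemma pick_sq: "(pick l P)^2 = l"
  by (simp add: pick_def)

lemma pick_nz: "l \<noteq> 0 \<Longrightarrow> pick l P \<noteq> 0"
  using pick_sq[of l P] by auto

lemma pick_good:
  assumes pq: "norm (P - Q) < norm (P + Q)" and l: "l \<noteq> 0"
  shows "good_roots (l * P^2) (l * Q^2) (pick l P * P) (pick l P * Q)"
proof -
  let ?s = "pick l P"
  have re: "0 \<le> Re (?s * P)" by (auto simp: pick_def)
  have sn: "cmod ?s > 0" using pick_nz[OF l] by simp
  have e: "?s * P - ?s * Q = ?s * (P - Q)" "?s * P + ?s * Q = ?s * (P + Q)" by (simp_all add: algebra_simps)
  have "cmod (?s * P - ?s * Q) < cmod (?s * P + ?s * Q)"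
    unfolding e norm_mult using pq sn by simp
  then show ?thesis
    unfolding good_roots_def using re by (simp add: power_mult_distrib pick_sq)
qed

primrec lseq :: "complex \<Rightarrow> complex \<Rightarrow> (nat \<Rightarrow> complex) \<Rightarrow> (nat \<Rightarrow> complex) \<Rightarrow> nat \<Rightarrow> complex" where
  "lseq l m A C 0 = l"
| "lseq l m A C (Suc n) = pick (lseq l m A C n) (A n) * pick m (C n)"

lemma pow_close:
  fixes w :: complex
  shows "norm (w ^ N - 1) \<le> (1 + norm (w - 1)) ^ N - 1"
proof (induction N)
  case 0 then show ?case by simp
next
  case (Suc N)
  have "w ^ Suc N - 1 = w * (w ^ N - 1) + (w - 1)" by (simp add: algebra_simps)
  then have "norm (w ^ Suc N - 1) \<le> norm w * norm (w ^ N - 1) + norm (w - 1)"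
    by (metis norm_mult norm_triangle_ineq)
  also have "\<dots> \<le> (1 + norm (w - 1)) * ((1 + norm (w - 1)) ^ N - 1) + norm (w - 1)"
  proof -
    have "norm w \<le> 1 + norm (w - 1)" using norm_triangle_ineq[of 1 "w - 1"] by simp
    then show ?thesis using Suc.IH by (intro add_right_mono mult_mono) auto
  qed
  also have "\<dots> = (1 + norm (w - 1)) ^ Suc N - 1" by (simp add: algebra_simps)
  finally show ?case .
qed


lemma lim_C:
  fixes C :: "nat \<Rightarrow> complex" and u :: real
  assumes R: "\<And>n. norm (C n - 1) \<le> 2 * u^(2^n)" and u: "0 \<le> u" "u < 1"
  shows "C \<longlonglongrightarrow> 1"
proof (rule LIM_zero_cancel, rule Lim_null_comparison)
  show "\<forall>\<^sub>F n in sequentially. norm (C n - 1) \<le> 2 * u ^ n"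
  proof (rule always_eventually, rule allI)
    fix n :: nat
    have "u^(2^n) \<le> u^n" using u by (intro power_decreasing) (auto intro: less_imp_le[OF less_exp])
    then show "norm (C n - 1) \<le> 2 * u ^ n" using R[of n] by linarith
  qed
  show "(\<lambda>n. 2 * u ^ n) \<longlonglongrightarrow> 0"
    using u by (intro tendsto_mult_right_zero LIMSEQ_power_zero) simp
qed

lemma lim_A:
  fixes A :: "nat \<Rightarrow> complex" and u :: real
  assumes R: "\<And>n. norm (A n - 1) \<le> 2 * u^(2^n)" and u: "0 \<le> u" "u < 1"
  shows "(\<lambda>n. A n ^ (2 ^ Suc n)) \<longlonglongrightarrow> 1"
proof (rule LIM_zero_cancel, rule Lim_null_comparison)
  define h where "h m = real m * u^m" for m :: nat
  show "\<forall>\<^sub>F n in sequentially. norm (A n ^ (2 ^ Suc n) - 1) \<le> exp (4 * h (2^n)) - 1"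
  proof (rule always_eventually, rule allI)
    fix n :: nat
    let ?e = "norm (A n - 1)"
    have "norm (A n ^ (2 ^ Suc n) - 1) \<le> (1 + ?e) ^ (2 ^ Suc n) - 1" by (rule pow_close)
    also have "\<dots> \<le> exp ?e ^ (2 ^ Suc n) - 1"
      by (intro diff_right_mono power_mono) (auto simp: add.commute exp_ge_add_one_self)
    also have "\<dots> = exp (real (2 ^ Suc n) * ?e) - 1" by (simp only: exp_of_nat_mult)
    also have "\<dots> \<le> exp (4 * h (2^n)) - 1"
    proof -
      have "real (2 ^ Suc n) * ?e \<le> real (2 ^ Suc n) * (2 * u^(2^n))"
        using R[of n] by (intro mult_left_mono) auto
      also have "\<dots> = 4 * h (2^n)" by (simp add: h_def)
      finally show ?thesis by simp
    qed
    finally show "norm (A n ^ (2 ^ Suc n) - 1) \<le> exp (4 * h (2^n)) - 1" .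
  qed
  have h0: "h \<longlonglongrightarrow> 0" unfolding h_def using u by (intro powser_times_n_limit_0) simp
  have sm: "strict_mono (\<lambda>n::nat. (2::nat) ^ n)" by (rule strict_monoI) simp
  have "(h \<circ> (\<lambda>n. 2 ^ n)) \<longlonglongrightarrow> 0" by (rule LIMSEQ_subseq_LIMSEQ[OF h0 sm])
  then have "(\<lambda>n. h (2 ^ n)) \<longlonglongrightarrow> 0" by (simp add: o_def)
  then have "(\<lambda>n. exp (4 * h (2^n)) - 1) \<longlonglongrightarrow> exp (4 * 0) - 1"
    by (intro tendsto_intros)
  then show "(\<lambda>n. exp (4 * h (2^n)) - 1) \<longlonglongrightarrow> 0" by simp
qed


lemma abstract_main:
  fixes A B C D :: "nat \<Rightarrow> complex" and lam mu :: complex and u :: real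
  assumes R1: "\<And>n. norm (A n - B n) < norm (A n + B n)"
    and R1': "\<And>n. norm (C n - D n) < norm (C n + D n)"
    and R2: "\<And>n. A n * C n + B n * D n = 2 * (A (Suc n))^2"
    and R3: "\<And>n. A n * D n + B n * C n = 2 * (B (Suc n))^2"
    and R4: "\<And>n. C n * C n + D n * D n = 2 * (C (Suc n))^2"
    and R5: "\<And>n. C n * D n + D n * C n = 2 * (D (Suc n))^2"
    and R6: "\<And>n. norm (A n - 1) \<le> 2 * u^(2^n)"
    and R7: "\<And>n. norm (C n - 1) \<le> 2 * u^(2^n)"
    and u: "0 \<le> u" "u < 1" and lam: "lam \<noteq> 0" and mu: "mu \<noteq> 0"
  shows "F_inf_eq (lam * (A 0)^2) (lam * (B 0)^2) (mu * (C 0)^2) (mu * (D 0)^2) (lam, mu)"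
  unfolding F_inf_eq_def
proof (intro conjI allI impI)
  define L where "L = lseq lam mu A C"
  have Lnz: "L n \<noteq> 0" for n
    by (induction n) (auto simp: L_def lam mu pick_nz)
  have CD: "C n * D n = (D (Suc n))^2" for n using R5[of n] by simp
  show "\<exists>x y z t. optimal_F_seq (lam * (A 0)^2) (lam * (B 0)^2) (mu * (C 0)^2) (mu * (D 0)^2) x y z t"
  proof (intro exI)
    show "optimal_F_seq (lam * (A 0)^2) (lam * (B 0)^2) (mu * (C 0)^2) (mu * (D 0)^2)
      (\<lambda>n. L n * (A n)^2) (\<lambda>n. L n * (B n)^2) (\<lambda>n. mu * (C n)^2) (\<lambda>n. mu * (D n)^2)"
      unfolding optimal_F_seq_def
    proof (intro conjI allI)
      fix n
      define p1 where "p1 = pick (L n) (A n)"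
      define p2 where "p2 = pick mu (C n)"
      have p2sq: "p2^2 = mu" by (simp add: p2_def pick_sq)
      have g1: "good_roots (L n * (A n)^2) (L n * (B n)^2) (p1 * A n) (p1 * B n)"
        unfolding p1_def by (rule pick_good[OF R1 Lnz])
      have g2: "good_roots (mu * (C n)^2) (mu * (D n)^2) (p2 * C n) (p2 * D n)"
        unfolding p2_def by (rule pick_good[OF R1' mu])
      have LS: "L (Suc n) = p1 * p2" by (simp add: L_def p1_def p2_def)
      have e1: "L (Suc n) * (A (Suc n))^2 = (p1 * A n * (p2 * C n) + p1 * B n * (p2 * D n)) / 2"
      proof -
        have "p1 * A n * (p2 * C n) + p1 * B n * (p2 * D n) = p1 * p2 * (A n * C n + B n * D n)"
          by (simp add: algebra_simps)
        then show ?thesis unfolding LS R2 by simp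
      qed
      have e2: "L (Suc n) * (B (Suc n))^2 = (p1 * A n * (p2 * D n) + p1 * B n * (p2 * C n)) / 2"
      proof -
        have "p1 * A n * (p2 * D n) + p1 * B n * (p2 * C n) = p1 * p2 * (A n * D n + B n * C n)"
          by (simp add: algebra_simps)
        then show ?thesis unfolding LS R3 by simp
      qed
      have e3: "mu * (C (Suc n))^2 = (mu * (C n)^2 + mu * (D n)^2) / 2"
      proof -
        have "mu * (C n)^2 + mu * (D n)^2 = mu * (C n * C n + D n * D n)"
          by (simp add: algebra_simps power2_eq_square)
        then show ?thesis unfolding R4 by simp
      qed
      have e4: "mu * (D (Suc n))^2 = p2 * C n * (p2 * D n)"
      proof -
        have "p2 * C n * (p2 * D n) = p2^2 * (C n * D n)" by (simp add: algebra_simps power2_eq_square)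
        then show ?thesis unfolding p2sq CD by simp
      qed
      show "\<exists>a b c d. good_roots (L n * (A n)^2) (L n * (B n)^2) a b \<and>
               good_roots (mu * (C n)^2) (mu * (D n)^2) c d \<and>
               L (Suc n) * (A (Suc n))^2 = (a * c + b * d) / 2 \<and>
               L (Suc n) * (B (Suc n))^2 = (a * d + b * c) / 2 \<and>
               mu * (C (Suc n))^2 = (mu * (C n)^2 + mu * (D n)^2) / 2 \<and>
               mu * (D (Suc n))^2 = c * d"
        by (intro exI conjI, rule g1, rule g2, rule e1, rule e2, rule e3, rule e4)
    qed (simp_all add: L_def)
  qed
next
  fix x y z t
  assume opt: "optimal_F_seq (lam * (A 0)^2) (lam * (B 0)^2) (mu * (C 0)^2) (mu * (D 0)^2) x y z t"
  have CD: "C n * D n = (D (Suc n))^2" for n using R5[of n] by simp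
  have Inv: "\<exists>l. l \<noteq> 0 \<and> l^(2^n) * mu = lam * mu^(2^n) \<and> x n = l * (A n)^2 \<and> y n = l * (B n)^2
              \<and> z n = mu * (C n)^2 \<and> t n = mu * (D n)^2" for n
  proof (induction n)
    case 0
    then show ?case using opt lam by (intro exI[of _ lam]) (auto simp: optimal_F_seq_def)
  next
    case (Suc n)
    then obtain l where l: "l \<noteq> 0" "l^(2^n) * mu = lam * mu^(2^n)" "x n = l * (A n)^2"
      "y n = l * (B n)^2" "z n = mu * (C n)^2" "t n = mu * (D n)^2" by blast
    from opt obtain a b c d where st: "good_roots (x n) (y n) a b" "good_roots (z n) (t n) c d"
      "x (Suc n) = (a * c + b * d) / 2" "y (Suc n) = (a * d + b * c) / 2"
      "z (Suc n) = (z n + t n) / 2" "t (Suc n) = c * d"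
      unfolding optimal_F_seq_def by blast
    have ga: "good_roots (l * (A n)^2) (l * (B n)^2) a b" using st(1) l(3,4) by simp
    obtain s where s: "s^2 = l" "a = s * A n" "b = s * B n"
      using good_unique[OF ga R1 l(1)] by blast
    have gc: "good_roots (mu * (C n)^2) (mu * (D n)^2) c d" using st(2) l(5,6) by simp
    obtain r where r: "r^2 = mu" "c = r * C n" "d = r * D n"
      using good_unique[OF gc R1' mu] by blast
    show ?case
    proof (intro exI conjI)
      show "s * r \<noteq> 0" using s(1) r(1) l(1) mu by auto
      have "(s * r)^(2^Suc n) = ((s^2) * (r^2))^(2^n)"
        by (simp add: power_mult power_mult_distrib)
      then have "(s * r)^(2^Suc n) * mu = l^(2^n) * mu * mu^(2^n)"
        unfolding s(1) r(1) by (simp add: power_mult_distrib algebra_simps)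
      also have "\<dots> = lam * mu^(2^Suc n)" unfolding l(2) by (simp add: power_mult power2_eq_square power_mult_distrib)
      finally show "(s * r)^(2^Suc n) * mu = lam * mu^(2^Suc n)" .
      have "x (Suc n) = s * r * (A n * C n + B n * D n) / 2" unfolding st(3) s r by (simp add: algebra_simps)
      then show "x (Suc n) = s * r * (A (Suc n))^2" unfolding R2 by simp
      have "y (Suc n) = s * r * (A n * D n + B n * C n) / 2" unfolding st(4) s r by (simp add: algebra_simps)
      then show "y (Suc n) = s * r * (B (Suc n))^2" unfolding R3 by simp
      have "z (Suc n) = mu * (C n * C n + D n * D n) / 2" unfolding st(5) l(5,6) by (simp add: algebra_simps power2_eq_square)
      then show "z (Suc n) = mu * (C (Suc n))^2" unfolding R4 by simp
      have "t (Suc n) = r^2 * (C n * D n)" unfolding st(6) r(2,3) by (simp add: algebra_simps power2_eq_square)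
      then show "t (Suc n) = mu * (D (Suc n))^2" unfolding r(1) CD .
    qed
  qed
  have zeq: "z = (\<lambda>n. mu * (C n)^2)"
    by (rule ext) (use Inv in blast)
  have xeq: "(x n / mu) ^ (2^n) = lam / mu * (A n ^ (2 ^ Suc n))" for n
  proof -
    obtain l where l: "l^(2^n) * mu = lam * mu^(2^n)" "x n = l * (A n)^2" using Inv[of n] by blast
    have "(x n / mu) ^ (2^n) = l^(2^n) * (A n ^ (2 ^ Suc n)) / mu^(2^n)"
      unfolding l(2) by (simp add: power_divide power_mult_distrib power_mult[symmetric] mult.commute)
    also have "l^(2^n) = lam * mu^(2^n) / mu" using l(1) mu by (simp add: field_simps)
    finally show ?thesis using mu by (simp add: field_simps)
  qed
  have Clim: "C \<longlonglongrightarrow> 1" by (rule lim_C[OF R7 u])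
  have Alim: "(\<lambda>n. A n ^ (2 ^ Suc n)) \<longlonglongrightarrow> 1" by (rule lim_A[OF R6 u])
  show "\<exists>zinf L. z \<longlonglongrightarrow> zinf \<and> zinf \<noteq> 0 \<and> (\<lambda>n. (x n / zinf) ^ 2 ^ n) \<longlonglongrightarrow> L \<and> (lam, mu) = (zinf * L, zinf)"
  proof (intro exI conjI)
    show "z \<longlonglongrightarrow> mu" unfolding zeq using tendsto_mult_left[OF tendsto_power[OF Clim, of 2], of mu] by simp
    show "mu \<noteq> 0" by (rule mu)
    show "(\<lambda>n. (x n / mu) ^ 2 ^ n) \<longlonglongrightarrow> lam / mu"
      unfolding xeq using tendsto_mult_left[OF Alim, of "lam / mu"] by simp
    show "(lam, mu) = (mu * (lam / mu), mu)" using mu by simp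
  qed
qed




lemma Im_pow2: "Im ((2::complex)^n * \<tau>) = 2^n * Im \<tau>"
  by (induction n) (auto simp: mult.assoc)

lemma D1:
  assumes "Im \<tau> > 0" "0 \<le> Im z" "Im z \<le> Im \<tau> / 4"
  shows "theta00 z \<tau> * theta00 0 \<tau> + theta01 z \<tau> * theta01 0 \<tau> = 2 * (theta00 z (2 * \<tau>))^2"
  using dup[OF assms, of 0] by (simp add: theta00_def theta01_def power2_eq_square)

lemma D2:
  assumes "Im \<tau> > 0" "0 \<le> Im z" "Im z \<le> Im \<tau> / 4"
  shows "theta00 z \<tau> * theta01 0 \<tau> + theta01 z \<tau> * theta00 0 \<tau> = 2 * (theta01 z (2 * \<tau>))^2"
proof -
  have h: "jtheta z \<tau> * jtheta (1/2) \<tau> + jtheta (z + 1/2) \<tau> * jtheta (1/2 + 1/2) \<tau>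
         = 2 * (jtheta (z + 1/2) (2 * \<tau>) * jtheta (z - 1/2) (2 * \<tau>))"
    using dup[OF assms, of "1/2"] by simp
  have e1: "jtheta (1/2 + 1/2) \<tau> = jtheta 0 \<tau>" using jtheta_shift1[of 0 \<tau>] by simp
  have e2: "jtheta (z - 1/2) (2 * \<tau>) = jtheta (z + 1/2) (2 * \<tau>)"
    using jtheta_shift1[of "z - 1/2" "2 * \<tau>"] by (simp add: algebra_simps)
  show ?thesis using h unfolding e1 e2 by (simp add: theta00_def theta01_def power2_eq_square)
qed

lemma mainTheorem10_aux:
  fixes \<tau> z lam mu :: complex
  assumes "Im \<tau> > 0" and "Im \<tau> \<ge> sqrt 3 / 4"
    and "0 \<le> Im z" and "Im z \<le> Im \<tau> / 4"
    and "lam \<noteq> 0" and "mu \<noteq> 0"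
  shows "F_inf_eq (lam * (theta00 z \<tau>)^2) (lam * (theta01 z \<tau>)^2)
                  (mu * (theta00 0 \<tau>)^2) (mu * (theta01 0 \<tau>)^2) (lam, mu)"
    and "theta00 z \<tau> \<noteq> 0" and "theta00 0 \<tau> \<noteq> 0"
proof -
  define T where "T n = (2::complex)^n * \<tau>" for n
  define A where "A n = theta00 z (T n)" for n
  define B where "B n = theta01 z (T n)" for n
  define C where "C n = theta00 0 (T n)" for n
  define D where "D n = theta01 0 (T n)" for n
  define u where "u = exp (- pi * Im \<tau> / 2)"
  have ImT: "Im (T n) = 2^n * Im \<tau>" for n by (simp add: T_def Im_pow2)
  have TS: "T (Suc n) = 2 * T n" for n by (simp add: T_def)
  have T0: "T 0 = \<tau>" by (simp add: T_def)
  have g1: "Im (T n) \<ge> Im \<tau>" for n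
  proof -
    have "1 * Im \<tau> \<le> 2^n * Im \<tau>" using assms(1) by (intro mult_right_mono) auto
    then show ?thesis by (simp add: ImT)
  qed
  have p: "Im (T n) > 0" for n using g1[of n] assms(1) by linarith
  have s3: "Im (T n) \<ge> sqrt 3 / 4" for n using g1[of n] assms(2) by linarith
  have zr: "Im z \<le> Im (T n) / 4" for n using g1[of n] assms(4) by linarith
  have zr0: "Im (0::complex) \<le> Im (T n) / 4" for n using p[of n] by simp
  have R1: "norm (A n - B n) < norm (A n + B n)" for n
    using theta_est(1)[OF s3 assms(3) zr] by (simp add: A_def B_def theta00_def theta01_def)
  have R1': "norm (C n - D n) < norm (C n + D n)" for n
    using theta_est(1)[OF s3 _ zr0, of n] by (simp add: C_def D_def theta00_def theta01_def)
  have R2: "A n * C n + B n * D n = 2 * (A (Suc n))^2" for n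
    using D1[OF p assms(3) zr] by (simp add: A_def B_def C_def D_def TS)
  have R3: "A n * D n + B n * C n = 2 * (B (Suc n))^2" for n
    using D2[OF p assms(3) zr] by (simp add: A_def B_def C_def D_def TS)
  have R4: "C n * C n + D n * D n = 2 * (C (Suc n))^2" for n
    using D1[OF p _ zr0, of n] by (simp add: A_def B_def C_def D_def TS)
  have R5: "C n * D n + D n * C n = 2 * (D (Suc n))^2" for n
    using D2[OF p _ zr0, of n] by (simp add: A_def B_def C_def D_def TS mult.commute)
  have ue: "exp (- (pi * Im (T n) / 2)) = u^(2^n)" for n
  proof -
    have e: "- (pi * Im (T n) / 2) = real (2^n) * (- pi * Im \<tau> / 2)" by (simp add: ImT)
    show ?thesis by (subst e) (simp only: u_def exp_of_nat_mult)
  qed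
  have R6: "norm (A n - 1) \<le> 2 * u^(2^n)" for n
    using theta_est(2)[OF s3 assms(3) zr, of n] by (simp add: A_def theta00_def ue)
  have R7: "norm (C n - 1) \<le> 2 * u^(2^n)" for n
    using theta_est(2)[OF s3 _ zr0, of n] by (simp add: C_def theta00_def ue)
  have u0: "0 \<le> u" and u1: "u < 1" using assms(1) by (auto simp: u_def)
  have main: "F_inf_eq (lam * (A 0)^2) (lam * (B 0)^2) (mu * (C 0)^2) (mu * (D 0)^2) (lam, mu)"
    by (rule abstract_main[OF R1 R1' R2 R3 R4 R5 R6 R7 u0 u1 assms(5,6)])
  then show "F_inf_eq (lam * (theta00 z \<tau>)^2) (lam * (theta01 z \<tau>)^2)
                  (mu * (theta00 0 \<tau>)^2) (mu * (theta01 0 \<tau>)^2) (lam, mu)"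
    by (simp add: A_def B_def C_def D_def T0)
  show "theta00 z \<tau> \<noteq> 0"
  proof
    assume "theta00 z \<tau> = 0"
    then have "A 0 = 0" by (simp add: A_def T0)
    then show False using R1[of 0] by (simp add: norm_minus_commute)
  qed
  show "theta00 0 \<tau> \<noteq> 0"
  proof
    assume "theta00 0 \<tau> = 0"
    then have "C 0 = 0" by (simp add: C_def T0)
    then show False using R1'[of 0] by (simp add: norm_minus_commute)
  qed
qed

theorem mainTheorem10:
  fixes \<tau> z lam mu :: complex
  assumes "Im \<tau> > 0" and "Im \<tau> \<ge> sqrt 3 / 4"
    and "0 \<le> Im z" and "Im z \<le> Im \<tau> / 4"
    and "lam \<noteq> 0" and "mu \<noteq> 0"
  shows "F_inf_eq (lam * (theta00 z \<tau>)^2) (lam * (theta01 z \<tau>)^2)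
                  (mu * (theta00 0 \<tau>)^2) (mu * (theta01 0 \<tau>)^2) (lam, mu)
       \<and> F_inf_eq 1 ((theta01 z \<tau>)^2 / (theta00 z \<tau>)^2) 1 ((theta01 0 \<tau>)^2 / (theta00 0 \<tau>)^2)
                  (1 / (theta00 z \<tau>)^2, 1 / (theta00 0 \<tau>)^2)"
proof
  show "F_inf_eq (lam * (theta00 z \<tau>)^2) (lam * (theta01 z \<tau>)^2)
                  (mu * (theta00 0 \<tau>)^2) (mu * (theta01 0 \<tau>)^2) (lam, mu)"
    by (rule mainTheorem10_aux(1)[OF assms])
  have n1: "theta00 z \<tau> \<noteq> 0" and n2: "theta00 0 \<tau> \<noteq> 0"
    using mainTheorem10_aux(2,3)[OF assms] by auto
  have "F_inf_eq (1 / (theta00 z \<tau>)^2 * (theta00 z \<tau>)^2) (1 / (theta00 z \<tau>)^2 * (theta01 z \<tau>)^2)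
           (1 / (theta00 0 \<tau>)^2 * (theta00 0 \<tau>)^2) (1 / (theta00 0 \<tau>)^2 * (theta01 0 \<tau>)^2)
           (1 / (theta00 z \<tau>)^2, 1 / (theta00 0 \<tau>)^2)"
    by (rule mainTheorem10_aux(1)[OF assms(1-4)]) (use n1 n2 in auto)
  then show "F_inf_eq 1 ((theta01 z \<tau>)^2 / (theta00 z \<tau>)^2) 1 ((theta01 0 \<tau>)^2 / (theta00 0 \<tau>)^2)
                  (1 / (theta00 z \<tau>)^2, 1 / (theta00 0 \<tau>)^2)"
    using n1 n2 by simp
qed



end
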